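(* For an integer $i\ge 0$ let $i_0i_1i_2\dots$ be its base-3 digits, least significant first, with $i=\sum_{j\ge0}i_j3^j$ (the sequence ends in infinitely many $0$'s). Call $i$ a 2-before-0 number if the first digit in this sequence that is different from $1$ equals $2$, and a 0-before-2 number otherwise. Define $x_i=1$ if $i$ is a 0-before-2 number and $x_i=-1$ if $i$ is a 2-before-0 number. Then the sequence $x_0,x_1,x_2,\dots$ equals $w_\alpha$ (term by term, indexing $w_\alpha$ from $0$).
   Context: $w_\alpha=\lim_{n\to\infty}\phi^n(1)$, where $\phi$ is the monoid endomorphism of $\{1,-1\}^*$ determined by $\phi(1)=1\,1\,(-1)$ and $\phi(-1)=1\,(-1)\,(-1)$. *)

theory Defs
  imports Main
begin

fun phi_letter :: "int \<Rightarrow> int list" where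
  "phi_letter x = (if x = 1 then [1, 1, -1] else [1, -1, -1])"

definition phi :: "int list \<Rightarrow> int list" where
  "phi w = concat (map phi_letter w)"

definition w_alpha :: "nat \<Rightarrow> int" where
  "w_alpha = (THE w. \<forall>n k. k < length ((phi ^^ n) [1]) \<longrightarrow> w k = ((phi ^^ n) [1]) ! k)"

definition digit3 :: "nat \<Rightarrow> nat \<Rightarrow> nat" where
  "digit3 i j = (i div 3 ^ j) mod 3"

text \<open>i is a 2-before-0 number if the first base-3 digit different from 1 equals 2.
  (Such a digit always exists since the digit sequence ends in zeros.)\<close>

definition two_before_zero :: "nat \<Rightarrow> bool" where
  "two_before_zero i = (digit3 i (LEAST j. digit3 i j \<noteq> 1) = 2)"

definition x_seq :: "nat \<Rightarrow> int" where
  "x_seq i = (if two_before_zero i then -1 else 1)"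

end

theory Submission
  imports Defs
begin

lemma phi_Cons: "phi (a # w) = phi_letter a @ phi w"
  by (simp add: phi_def)

lemma len_phi_letter: "length (phi_letter a) = 3" by simp

lemma len_phi: "length (phi w) = 3 * length w"
  by (induction w) (simp_all add: phi_def)

lemma phi_nth: "q < length w \<Longrightarrow> r < 3 \<Longrightarrow> phi w ! (3*q+r) = phi_letter (w!q) ! r"
proof (induction w arbitrary: q)
  case Nil then show ?case by simp
next
  case (Cons a w)
  show ?case
  proof (cases q)
    case 0 then show ?thesis using Cons by (simp add: phi_Cons nth_append)
  next
    case (Suc q')
    have "3*q+r = 3 + (3*q'+r)" using Suc by simp
    then show ?thesis using Cons Suc by (simp add: phi_Cons nth_append)
  qed
qed

lemma digit3_0: "r < 3 \<Longrightarrow> digit3 (3*q+r) 0 = r"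
  by (simp add: digit3_def)

lemma digit3_Suc: "r < 3 \<Longrightarrow> digit3 (3*q+r) (Suc j) = digit3 q j"
proof -
  assume r: "r < 3"
  have "(3*q+r) div 3 ^ Suc j = ((3*q+r) div 3) div 3 ^ j"
    by (simp add: div_mult2_eq mult.commute)
  also have "(3*q+r) div 3 = q" using r by simp
  finally show ?thesis by (simp add: digit3_def)
qed

lemma digit3_large: "digit3 q q = 0"
proof -
  have "q < 3 ^ q"
    by (induction q) auto
  then show ?thesis by (simp add: digit3_def)
qed

lemma x_seq_rec: "r < 3 \<Longrightarrow> x_seq (3*q+r) = (if r = 0 then 1 else if r = 2 then -1 else x_seq q)"
proof -
  assume r: "r < 3"
  show ?thesis
  proof (cases "r = 1")
    case False
    then have "(LEAST j. digit3 (3*q+r) j \<noteq> 1) = 0"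
      using digit3_0[OF r] by (intro Least_eq_0) simp
    then show ?thesis using False r digit3_0[OF r]
      by (auto simp: x_seq_def two_before_zero_def)
  next
    case True
    have ex: "digit3 (3*q+r) (Suc q) \<noteq> 1" using digit3_Suc[OF r] digit3_large by simp
    have "(LEAST j. digit3 (3*q+r) j \<noteq> 1) = Suc (LEAST j. digit3 (3*q+r) (Suc j) \<noteq> 1)"
      by (rule Least_Suc[where P="\<lambda>j. digit3 (3*q+r) j \<noteq> 1", OF ex]) (use digit3_0[OF r] True in simp)
    also have "\<dots> = Suc (LEAST j. digit3 q j \<noteq> 1)" using digit3_Suc[OF r] by simp
    finally show ?thesis using True digit3_Suc[OF r]
      by (simp add: x_seq_def two_before_zero_def)
  qed
qed

lemma x_seq_pm: "x_seq i = 1 \<or> x_seq i = -1"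
  by (simp add: x_seq_def)

lemma len_W: "length ((phi ^^ n) [1]) = 3 ^ n"
  by (induction n) (simp_all add: len_phi)

lemma W_nth: "k < 3 ^ n \<Longrightarrow> (phi ^^ n) [1] ! k = x_seq k"
proof (induction n arbitrary: k)
  case 0
  then have "k = 0" by simp
  then show ?case using x_seq_rec[of 0 0] by simp
next
  case (Suc n)
  define q where "q = k div 3"
  define r where "r = k mod 3"
  have k: "k = 3*q+r" and r: "r < 3" by (simp_all add: q_def r_def)
  have q: "q < 3 ^ n" using Suc.prems k by simp
  have "(phi ^^ Suc n) [1] ! k = phi_letter (x_seq q) ! r"
    using phi_nth[of q "(phi ^^ n) [1]" r] q r k Suc.IH[OF q] len_W by simp
  also have "\<dots> = x_seq k"
  proof -
    have "r = 0 \<or> r = 1 \<or> r = 2" using r by auto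
    then show ?thesis using x_seq_rec[OF r, of q] k x_seq_pm[of q] by auto
  qed
  finally show ?case .
qed

theorem mainTheorem4:
  shows "\<forall>i. x_seq i = w_alpha i"
proof -
  let ?P = "\<lambda>w. \<forall>n k. k < length ((phi ^^ n) [1]) \<longrightarrow> w k = ((phi ^^ n) [1]) ! k"
  have P: "?P x_seq" using W_nth len_W by simp
  have u: "w = x_seq" if "?P w" for w
  proof
    fix k
    have "k < 3 ^ k" by (induction k) auto
    then show "w k = x_seq k" using that W_nth len_W by metis
  qed
  have "w_alpha = x_seq" unfolding w_alpha_def
    by (rule the_equality[where P="?P", OF P u])
  then show ?thesis by simp
qed

end
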